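(* The following single-statistic generating functions hold over $S_n(123,132)$: $$\sum_{n\ge0}\sum_{\pi\in S_n(123,132)}x^nu^{\operatorname{lrmax}(\pi)}=\frac{1-2x+ux-ux^2+u^2x^2}{1-2x},\qquad \sum_{n\ge0}\sum_{\pi\in S_n(123,132)}x^nv^{\operatorname{rlmax}(\pi)}=\frac{1-x}{1-x-vx},$$ $$\sum_{n\ge0}\sum_{\pi\in S_n(123,132)}x^ns^{\operatorname{lrmin}(\pi)}=\frac{1-sx}{1-2sx-sx^2+s^2x^2},\qquad \sum_{n\ge0}\sum_{\pi\in S_n(123,132)}x^nt^{\operatorname{rlmin}(\pi)}=\frac{1-2x+tx-tx^2+t^2x^2}{1-2x}.$$
   Context: For $n\ge 0$, $S_n$ denotes the set of permutations $\pi=\pi_1\cdots\pi_n$ of $[n]=\{1,\dots,n\}$ ($S_0$ consists of the empty permutation, for which all statistics are $0$). $S_n(123,132)$ is the set of $\pi\in S_n$ containing no subsequence order-isomorphic to $123$ or to $132$. $\pi_i$ is a left-to-right maximum (resp. minimum) if it is larger (resp. smaller) than every $\pi_j$ with $j<i$, and a right-to-left maximum (resp. minimum) if it is larger (resp. smaller) than every $\pi_j$ with $j>i$; $\operatorname{lrmax},\operatorname{lrmin},\operatorname{rlmax},\operatorname{rlmin}$ count these. *)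

theory Defs
  imports "HOL-Combinatorics.Multiset_Permutations" "HOL-Computational_Algebra.Formal_Power_Series"
begin

(* Permutations of [n] in one-line notation: lists pi_1 ... pi_n *)
definition Sn :: "nat \<Rightarrow> nat list set" where
  "Sn n = permutations_of_set {1..n}"

definition contains :: "nat list \<Rightarrow> nat list \<Rightarrow> bool" where
  "contains p w \<longleftrightarrow> (\<exists>f. strict_mono_on {0..<length p} f
       \<and> (\<forall>a<length p. f a < length w)
       \<and> (\<forall>a<length p. \<forall>b<length p. p ! a < p ! b \<longleftrightarrow> w ! (f a) < w ! (f b)))"

definition Sn_av :: "nat \<Rightarrow> nat list set" where
  "Sn_av n = {w \<in> Sn n. \<not> contains [1,2,3] w \<and> \<not> contains [1,3,2] w}"

definition lrmax :: "nat list \<Rightarrow> nat" where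
  "lrmax w = card {i. i < length w \<and> (\<forall>j<i. w ! j < w ! i)}"
definition lrmin :: "nat list \<Rightarrow> nat" where
  "lrmin w = card {i. i < length w \<and> (\<forall>j<i. w ! i < w ! j)}"
definition rlmax :: "nat list \<Rightarrow> nat" where
  "rlmax w = card {i. i < length w \<and> (\<forall>j. i < j \<and> j < length w \<longrightarrow> w ! j < w ! i)}"
definition rlmin :: "nat list \<Rightarrow> nat" where
  "rlmin w = card {i. i < length w \<and> (\<forall>j. i < j \<and> j < length w \<longrightarrow> w ! i < w ! j)}"

definition gf :: "(nat list \<Rightarrow> nat) \<Rightarrow> 'a::comm_ring_1 \<Rightarrow> 'a fps" where
  "gf stat c = Abs_fps (\<lambda>n. \<Sum>w\<in>Sn_av n. c ^ stat w)"

end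

theory Submission
  imports Defs
begin

unbundle fps_syntax


definition av :: "nat list \<Rightarrow> bool" where
  "av w \<longleftrightarrow> (\<forall>i j k. i < j \<longrightarrow> j < k \<longrightarrow> k < length w \<longrightarrow> \<not> (w!i < w!j \<and> w!i < w!k))"

lemma contains3_imp:
  assumes "contains p w" "length p = 3" "p!0 < p!1" "p!0 < p!2"
  shows "\<not> av w"
proof -
  obtain f where f: "strict_mono_on {0..<length p} f" "\<forall>a<length p. f a < length w"
     "\<forall>a<length p. \<forall>b<length p. p ! a < p ! b \<longleftrightarrow> w ! (f a) < w ! (f b)"
    using assms(1) unfolding contains_def by blast
  have "f 0 < f 1" "f 1 < f 2" using f(1) assms(2) unfolding strict_mono_on_def by auto
  moreover have "f 2 < length w" using f(2) assms(2) by auto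
  moreover have "w!(f 0) < w!(f 1)" "w!(f 0) < w!(f 2)" using f(3) assms by auto
  ultimately show ?thesis unfolding av_def by blast
qed

lemma not_av_imp:
  assumes "\<not> av w" "distinct w"
  shows "contains [1,2,3] w \<or> contains [1,3,2] w"
proof -
  obtain i j k where ijk: "i < j" "j < k" "k < length w" "w!i < w!j" "w!i < w!k"
    using assms(1) unfolding av_def by blast
  have ne: "w!j \<noteq> w!k" using ijk assms(2) nth_eq_iff_index_eq by fastforce
  define f where "f = (\<lambda>a::nat. if a = 0 then i else if a = 1 then j else k)"
  have sm: "strict_mono_on {0..<3} f" unfolding strict_mono_on_def f_def using ijk by auto
  have lt: "\<forall>a<3. f a < length w" unfolding f_def using ijk by auto
  show ?thesis
  proof (cases "w!j < w!k")
    case True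
    have "\<forall>a<3. \<forall>b<3. [1,2,3::nat] ! a < [1,2,3] ! b \<longleftrightarrow> w ! (f a) < w ! (f b)"
    proof (intro allI impI)
      fix a b :: nat assume "a < 3" "b < 3"
      then have "a \<in> {0,1,2}" "b \<in> {0,1,2}" by auto
      then show "[1,2,3::nat] ! a < [1,2,3] ! b \<longleftrightarrow> w ! (f a) < w ! (f b)"
        using ijk True unfolding f_def by auto
    qed
    then show ?thesis unfolding contains_def using sm lt by (intro disjI1 exI[of _ f]) (auto simp: numeral_3_eq_3)
  next
    case False
    then have F: "w!k < w!j" using ne by auto
    have "\<forall>a<3. \<forall>b<3. [1,3,2::nat] ! a < [1,3,2] ! b \<longleftrightarrow> w ! (f a) < w ! (f b)"
    proof (intro allI impI)
      fix a b :: nat assume "a < 3" "b < 3"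
      then have "a \<in> {0,1,2}" "b \<in> {0,1,2}" by auto
      then show "[1,3,2::nat] ! a < [1,3,2] ! b \<longleftrightarrow> w ! (f a) < w ! (f b)"
        using ijk F unfolding f_def by auto
    qed
    then show ?thesis unfolding contains_def using sm lt by (intro disjI2 exI[of _ f]) (auto simp: numeral_3_eq_3)
  qed
qed

lemma Sn_av_alt: "Sn_av n = {w. distinct w \<and> set w = {1..n} \<and> av w}"
proof -
  have "\<And>w. distinct w \<Longrightarrow> (\<not> contains [1,2,3] w \<and> \<not> contains [1,3,2] w) \<longleftrightarrow> av w"
    using contains3_imp[of "[1,2,3]"] contains3_imp[of "[1,3,2]"] not_av_imp by force
  then show ?thesis unfolding Sn_av_def Sn_def permutations_of_set_def by auto
qed

lemma av_Cons: "av (x # w) \<longleftrightarrow> av w \<and> (\<forall>j k. j < k \<longrightarrow> k < length w \<longrightarrow> \<not> (x < w!j \<and> x < w!k))"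
proof
  assume a: "av (x # w)"
  have "av w" unfolding av_def
  proof (intro allI impI)
    fix i j k assume "i < j" "j < k" "k < length w"
    then show "\<not> (w!i < w!j \<and> w!i < w!k)" using a[unfolded av_def, rule_format, of "Suc i" "Suc j" "Suc k"] by simp
  qed
  moreover have "\<forall>j k. j < k \<longrightarrow> k < length w \<longrightarrow> \<not> (x < w!j \<and> x < w!k)"
    using a[unfolded av_def, rule_format, of 0 "Suc _" "Suc _"] by simp
  ultimately show "av w \<and> (\<forall>j k. j < k \<longrightarrow> k < length w \<longrightarrow> \<not> (x < w!j \<and> x < w!k))" ..
next
  assume a: "av w \<and> (\<forall>j k. j < k \<longrightarrow> k < length w \<longrightarrow> \<not> (x < w!j \<and> x < w!k))"
  show "av (x # w)" unfolding av_def
  proof (intro allI impI)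
    fix i j k assume ijk: "i < j" "j < k" "k < length (x#w)"
    then obtain j' k' where jk: "j = Suc j'" "k = Suc k'" by (metis less_nat_zero_code not0_implies_Suc)
    show "\<not> ((x#w)!i < (x#w)!j \<and> (x#w)!i < (x#w)!k)"
    proof (cases i)
      case 0 then show ?thesis using a ijk jk by auto
    next
      case (Suc i') then show ?thesis using a[THEN conjunct1, unfolded av_def] ijk jk by auto
    qed
  qed
qed

lemma av_map:
  assumes "\<forall>a\<in>set w. \<forall>b\<in>set w. (g a < g b) = (a < b)"
  shows "av (map g w) = av w"
  unfolding av_def using assms by (auto simp: nth_mem)




definition hh :: "nat \<Rightarrow> nat \<Rightarrow> nat" where "hh m y = (if y = m then Suc m else y)"
definition hi :: "nat \<Rightarrow> nat \<Rightarrow> nat" where "hi m y = (if y = Suc m then m else y)"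

lemma hh_mono: "a \<in> {1..m} \<Longrightarrow> b \<in> {1..m} \<Longrightarrow> (hh m a < hh m b) = (a < b)"
  unfolding hh_def by auto

lemma hh_img: "m \<ge> 1 \<Longrightarrow> hh m ` {1..m} = {1..Suc m} - {m}"
proof (intro equalityI subsetI)
  fix y assume "y \<in> hh m ` {1..m}" then show "y \<in> {1..Suc m} - {m}" unfolding hh_def by auto
next
  fix y assume y: "y \<in> {1..Suc m} - {m}" "m \<ge> 1"
  show "y \<in> hh m ` {1..m}"
  proof (cases "y = Suc m")
    case True then have "y = hh m m" unfolding hh_def by simp
    then show ?thesis using y by auto
  next
    case False then have "y = hh m y" "y \<in> {1..m}" using y unfolding hh_def by auto
    then show ?thesis by blast
  qed
qed

lemma hi_img: "m \<ge> 1 \<Longrightarrow> hi m ` ({1..Suc m} - {m}) = {1..m}"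
proof (intro equalityI subsetI)
  fix y assume "y \<in> hi m ` ({1..Suc m} - {m})" "m \<ge> 1" then show "y \<in> {1..m}" unfolding hi_def by auto
next
  fix y assume y: "y \<in> {1..m}" "m \<ge> 1"
  show "y \<in> hi m ` ({1..Suc m} - {m})"
  proof (cases "y = m")
    case True then have "y = hi m (Suc m)" unfolding hi_def by simp
    then show ?thesis using y by auto
  next
    case False then have "y = hi m y" "y \<in> {1..Suc m} - {m}" using y unfolding hi_def by auto
    then show ?thesis by blast
  qed
qed

lemma hi_hh: "y \<in> {1..m} \<Longrightarrow> hi m (hh m y) = y" unfolding hi_def hh_def by auto
lemma hh_hi: "y \<noteq> m \<Longrightarrow> y \<le> Suc m \<Longrightarrow> hh m (hi m y) = y" unfolding hi_def hh_def by auto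

lemma map_hi_hh: "set w \<subseteq> {1..m} \<Longrightarrow> map (hi m) (map (hh m) w) = w"
  by (induction w) (auto simp: hi_hh)

lemma mem1: "w \<in> Sn_av (Suc m) \<Longrightarrow> m \<ge> 1 \<Longrightarrow> Suc m \<in> set w \<and> m \<in> set w"
  unfolding Sn_av_alt by auto

lemma cons_max_in: assumes "w \<in> Sn_av m" shows "Suc m # w \<in> Sn_av (Suc m)"
proof -
  have w: "distinct w" "set w = {1..m}" "av w" using assms unfolding Sn_av_alt by auto
  have "\<forall>j<length w. w!j < Suc m" using w(2) nth_mem by fastforce
  then have "av (Suc m # w)" using w(3) by (auto simp: av_Cons)
  moreover have "set (Suc m # w) = {1..Suc m}" using w(2) by auto
  ultimately show ?thesis using w(1,2) unfolding Sn_av_alt by auto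
qed

lemma cons_sec_in: assumes "w \<in> Sn_av m" "m \<ge> 1" shows "m # map (hh m) w \<in> Sn_av (Suc m)"
proof -
  have w: "distinct w" "set w = {1..m}" "av w" using assms unfolding Sn_av_alt by auto
  have inj: "inj_on (hh m) {1..m}" unfolding inj_on_def hh_def by auto
  have d: "distinct (map (hh m) w)" using w inj by (simp add: distinct_map)
  have s: "set (map (hh m) w) = {1..Suc m} - {m}" using w(2) hh_img[OF assms(2)] by simp
  have a: "av (map (hh m) w)" using av_map[of w "hh m"] w hh_mono by auto
  have c: "\<forall>j k. j < k \<longrightarrow> k < length (map (hh m) w) \<longrightarrow> \<not> (m < (map (hh m) w)!j \<and> m < (map (hh m) w)!k)"
  proof (intro allI impI notI)
    fix j k assume jk: "j < k" "k < length (map (hh m) w)" "m < (map (hh m) w)!j \<and> m < (map (hh m) w)!k"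
    have "(map (hh m) w)!j \<in> {1..Suc m} - {m}" "(map (hh m) w)!k \<in> {1..Suc m} - {m}"
      using jk s nth_mem by (metis order.strict_trans)+
    then have "(map (hh m) w)!j = (map (hh m) w)!k" using jk(3) by auto
    then show False using d jk nth_eq_iff_index_eq by fastforce
  qed
  have "set (m # map (hh m) w) = {1..Suc m}" using s assms(2) by auto
  moreover have "distinct (m # map (hh m) w)" using d s by auto
  ultimately show ?thesis using a c unfolding Sn_av_alt by (auto simp: av_Cons)
qed

lemma decomp_set:
  assumes "m \<ge> 1"
  shows "Sn_av (Suc m) = Cons (Suc m) ` Sn_av m \<union> (\<lambda>w. m # map (hh m) w) ` Sn_av m"
proof
  show "Cons (Suc m) ` Sn_av m \<union> (\<lambda>w. m # map (hh m) w) ` Sn_av m \<subseteq> Sn_av (Suc m)"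
    using cons_max_in cons_sec_in assms by auto
next
  show "Sn_av (Suc m) \<subseteq> Cons (Suc m) ` Sn_av m \<union> (\<lambda>w. m # map (hh m) w) ` Sn_av m"
  proof
    fix w assume wA: "w \<in> Sn_av (Suc m)"
    then have w: "distinct w" "set w = {1..Suc m}" "av w" unfolding Sn_av_alt by auto
    then obtain x w' where xw: "w = x # w'" by (cases w) auto
    have x: "x \<in> {1..Suc m}" using w(2) xw by auto
    have d': "distinct w'" "x \<notin> set w'" using w(1) xw by auto
    have s': "set w' = {1..Suc m} - {x}" using w(2) d' xw by auto
    have a': "av w'" "\<forall>j k. j < k \<longrightarrow> k < length w' \<longrightarrow> \<not> (x < w'!j \<and> x < w'!k)"
      using w(3) xw by (auto simp: av_Cons)
    have "x = Suc m \<or> x = m"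
    proof (rule ccontr)
      assume "\<not> (x = Suc m \<or> x = m)"
      then have "x < m" using x by auto
      then have "m \<in> set w'" "Suc m \<in> set w'" using s' assms by auto
      then obtain j k where jk: "j < length w'" "k < length w'" "w'!j = m" "w'!k = Suc m"
        by (metis in_set_conv_nth)
      have "j \<noteq> k" using jk by auto
      show False
      proof (cases "j < k")
        case True then show False using a'(2)[rule_format, OF True jk(2)] jk \<open>x < m\<close> by auto
      next
        case False then have kj: "k < j" using \<open>j \<noteq> k\<close> by auto
        then show False using a'(2)[rule_format, OF kj jk(1)] jk \<open>x < m\<close> by auto
      qed
    qed
    then show "w \<in> Cons (Suc m) ` Sn_av m \<union> (\<lambda>w. m # map (hh m) w) ` Sn_av m"
    proof
      assume "x = Suc m"
      then have "w' \<in> Sn_av m" using d' s' a' unfolding Sn_av_alt by auto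
      then show ?thesis using xw \<open>x = Suc m\<close> by auto
    next
      assume xm: "x = m"
      define w0 where "w0 = map (hi m) w'"
      have inj: "inj_on (hi m) ({1..Suc m} - {m})" unfolding inj_on_def hi_def by auto
      have "distinct w0" unfolding w0_def using d' s' inj xm by (simp add: distinct_map)
      moreover have "set w0 = {1..m}" unfolding w0_def using s' xm assms hi_img by simp
      moreover have "av w0" unfolding w0_def using a'(1) s' xm
        by (subst av_map) (auto simp: hi_def)
      ultimately have "w0 \<in> Sn_av m" unfolding Sn_av_alt by auto
      moreover have "map (hh m) w0 = w'" unfolding w0_def map_map
        by (rule map_idI) (use s' xm in \<open>auto simp: hh_hi\<close>)
      ultimately show ?thesis using xw xm by auto
    qed
  qed
qed




lemma finite_Sn_av: "finite (Sn_av n)"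
  unfolding Sn_av_def Sn_def by (rule finite_subset[OF _ finite_permutations_of_set[of "{1..n}"]]) auto

lemma Sn_av_0: "Sn_av 0 = {[]}"
  unfolding Sn_av_alt by (auto simp: av_def)

lemma Sn_av_1: "Sn_av 1 = {[1]}"
proof -
  have "distinct w \<and> set w = {1} \<longleftrightarrow> w = [1]" for w :: "nat list"
  proof
    assume a: "distinct w \<and> set w = {1}"
    then obtain x xs where w: "w = x # xs" by (cases w) auto
    then have "x = 1" "set xs \<subseteq> {1}" "1 \<notin> set xs" using a by auto
    then show "w = [1]" using w by (cases xs) auto
  qed auto
  then show ?thesis unfolding Sn_av_alt by (auto simp: av_def)
qed

lemma decomp_sum:
  assumes "m \<ge> 1"
  shows "(\<Sum>w\<in>Sn_av (Suc m). F w) = (\<Sum>w\<in>Sn_av m. F (Suc m # w)) + (\<Sum>w\<in>Sn_av m. F (m # map (hh m) w))"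
proof -
  have inj1: "inj_on (Cons (Suc m)) (Sn_av m)" by (auto simp: inj_on_def)
  have inj2: "inj_on (\<lambda>w. m # map (hh m) w) (Sn_av m)"
  proof (rule inj_onI)
    fix a b assume ab: "a \<in> Sn_av m" "b \<in> Sn_av m" "m # map (hh m) a = m # map (hh m) b"
    have "a = map (hi m) (map (hh m) a)" using ab(1) map_hi_hh[of a m] unfolding Sn_av_alt by auto
    also have "\<dots> = map (hi m) (map (hh m) b)" using ab(3) by simp
    also have "\<dots> = b" using ab(2) map_hi_hh[of b m] unfolding Sn_av_alt by auto
    finally show "a = b" .
  qed
  have disj: "Cons (Suc m) ` Sn_av m \<inter> (\<lambda>w. m # map (hh m) w) ` Sn_av m = {}" by auto
  show ?thesis
    unfolding decomp_set[OF assms]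
    by (subst sum.union_disjoint) (use finite_Sn_av disj inj1 inj2 in \<open>auto simp: sum.reindex\<close>)
qed

lemma card_Suc_split:
  "card {i. i < Suc n \<and> P i} = (if P 0 then 1 else 0) + card {i. i < n \<and> P (Suc i)}"
proof -
  have e: "{i. i < Suc n \<and> P i} = (if P 0 then {0} else {}) \<union> Suc ` {i. i < n \<and> P (Suc i)}"
    by (auto simp: image_iff less_Suc_eq_0_disj)
  have "card ((if P 0 then {0} else {}) \<union> Suc ` {i. i < n \<and> P (Suc i)}) =
        card (if P 0 then {0::nat} else {}) + card (Suc ` {i. i < n \<and> P (Suc i)})"
    by (rule card_Un_disjoint) auto
  also have "card (Suc ` {i. i < n \<and> P (Suc i)}) = card {i. i < n \<and> P (Suc i)}"
    by (rule card_image) auto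
  finally show ?thesis unfolding e by simp
qed




lemma lrmax_Cons: "lrmax (x # w) = 1 + card {i. i < length w \<and> x < w!i \<and> (\<forall>j<i. w!j < w!i)}"
  unfolding lrmax_def by (simp only: length_Cons card_Suc_split) (simp add: All_less_Suc2 del: One_nat_def)

lemma lrmin_Cons: "lrmin (x # w) = 1 + card {i. i < length w \<and> w!i < x \<and> (\<forall>j<i. w!i < w!j)}"
  unfolding lrmin_def by (simp only: length_Cons card_Suc_split) (simp add: All_less_Suc2)

lemma shift_all: "(\<forall>j. Suc i < j \<and> j < Suc n \<longrightarrow> Q j) \<longleftrightarrow> (\<forall>j. i < j \<and> j < n \<longrightarrow> Q (Suc j))"
proof
  assume H: "\<forall>j. Suc i < j \<and> j < Suc n \<longrightarrow> Q j"
  show "\<forall>j. i < j \<and> j < n \<longrightarrow> Q (Suc j)"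
  proof (intro allI impI)
    fix j assume "i < j \<and> j < n" then show "Q (Suc j)" using H[rule_format, of "Suc j"] by simp
  qed
next
  assume H: "\<forall>j. i < j \<and> j < n \<longrightarrow> Q (Suc j)"
  show "\<forall>j. Suc i < j \<and> j < Suc n \<longrightarrow> Q j"
  proof (intro allI impI)
    fix j assume j: "Suc i < j \<and> j < Suc n"
    then obtain k where k: "j = Suc k" by (cases j) auto
    then show "Q j" using H[rule_format, of k] j by simp
  qed
qed

lemma zero_all: "(\<forall>j. 0 < j \<and> j < Suc (length w) \<longrightarrow> Q ((x#w)!j)) \<longleftrightarrow> (\<forall>y\<in>set w. Q y)"
proof
  assume H: "\<forall>j. 0 < j \<and> j < Suc (length w) \<longrightarrow> Q ((x#w)!j)"
  show "\<forall>y\<in>set w. Q y"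
  proof
    fix y assume "y \<in> set w"
    then obtain k where "k < length w" "w!k = y" by (auto simp: in_set_conv_nth)
    then show "Q y" using H[rule_format, of "Suc k"] by simp
  qed
next
  assume H: "\<forall>y\<in>set w. Q y"
  show "\<forall>j. 0 < j \<and> j < Suc (length w) \<longrightarrow> Q ((x#w)!j)"
  proof (intro allI impI)
    fix j assume j: "0 < j \<and> j < Suc (length w)"
    then obtain k where k: "j = Suc k" by (cases j) auto
    then show "Q ((x#w)!j)" using H j by (simp add: nth_mem)
  qed
qed

lemma rlmax_Cons: "rlmax (x # w) = (if \<forall>y\<in>set w. y < x then 1 else 0) + rlmax w"
proof -
  have 1: "(\<forall>j. 0 < j \<and> j < Suc (length w) \<longrightarrow> (x#w)!j < (x#w)!0) \<longleftrightarrow> (\<forall>y\<in>set w. y < x)"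
    using zero_all[of w "\<lambda>y. y < x" x] by simp
  have 2: "(\<forall>j. Suc i < j \<and> j < Suc (length w) \<longrightarrow> (x#w)!j < (x#w)!Suc i) \<longleftrightarrow>
       (\<forall>j. i < j \<and> j < length w \<longrightarrow> w!j < w!i)" for i
    using shift_all[of i "length w" "\<lambda>j. (x#w)!j < (x#w)!Suc i"] by simp
  show ?thesis unfolding rlmax_def by (simp only: length_Cons card_Suc_split 1 2)
qed

lemma rlmin_Cons: "rlmin (x # w) = (if \<forall>y\<in>set w. x < y then 1 else 0) + rlmin w"
proof -
  have 1: "(\<forall>j. 0 < j \<and> j < Suc (length w) \<longrightarrow> (x#w)!0 < (x#w)!j) \<longleftrightarrow> (\<forall>y\<in>set w. x < y)"
    using zero_all[of w "\<lambda>y. x < y" x] by simp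
  have 2: "(\<forall>j. Suc i < j \<and> j < Suc (length w) \<longrightarrow> (x#w)!Suc i < (x#w)!j) \<longleftrightarrow>
       (\<forall>j. i < j \<and> j < length w \<longrightarrow> w!i < w!j)" for i
    using shift_all[of i "length w" "\<lambda>j. (x#w)!Suc i < (x#w)!j"] by simp
  show ?thesis unfolding rlmin_def by (simp only: length_Cons card_Suc_split 1 2)
qed

lemma stats_map:
  assumes "\<forall>a\<in>set w. \<forall>b\<in>set w. (g a < g b) = (a < b)"
  shows "lrmax (map g w) = lrmax w" "lrmin (map g w) = lrmin w"
        "rlmax (map g w) = rlmax w" "rlmin (map g w) = rlmin w"
proof -
  have e: "i < length w \<Longrightarrow> j < length w \<Longrightarrow> (g (w!i) < g (w!j)) = (w!i < w!j)" for i j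
    using assms by (simp add: nth_mem)
  have e2: "i < length w \<Longrightarrow> j < i \<Longrightarrow> (g (w!i) < g (w!j)) = (w!i < w!j) \<and> (g (w!j) < g (w!i)) = (w!j < w!i)" for i j
    using e by simp
  have e3: "j < length w \<Longrightarrow> i < j \<Longrightarrow> (g (w!i) < g (w!j)) = (w!i < w!j) \<and> (g (w!j) < g (w!i)) = (w!j < w!i)" for i j
    using e by simp
  show "lrmax (map g w) = lrmax w" unfolding lrmax_def
    by (rule arg_cong[where f=card], rule Collect_cong) (simp cong: conj_cong add: e2)
  show "lrmin (map g w) = lrmin w" unfolding lrmin_def
    by (rule arg_cong[where f=card], rule Collect_cong) (simp cong: conj_cong add: e2)
  show "rlmax (map g w) = rlmax w" unfolding rlmax_def
    by (rule arg_cong[where f=card], rule Collect_cong) (simp cong: conj_cong add: e3)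
  show "rlmin (map g w) = rlmin w" unfolding rlmin_def
    by (rule arg_cong[where f=card], rule Collect_cong) (simp cong: conj_cong add: e3)
qed






lemma fps_div_eqI:
  fixes A P Q :: "'a::field fps"
  assumes "Q $ 0 \<noteq> 0" "A * Q = P"
  shows "A = P / Q"
proof -
  have "P / Q = A * (Q * inverse Q)" using assms by (simp add: fps_divide_unit mult.assoc)
  also have "Q * inverse Q = 1" using assms(1) by (rule inverse_mult_eq_1')
  finally show ?thesis by simp
qed

lemma gf_solve:
  fixes A :: "nat \<Rightarrow> 'a::field"
  assumes rec: "\<And>n. n \<ge> 3 \<Longrightarrow> A n = a * A (n-1) + b * A (n-2)"
  shows "Abs_fps A = (fps_const (A 0) + fps_const (A 1 - a * A 0) * fps_X
           + fps_const (A 2 - a * A 1 - b * A 0) * fps_X^2) / (1 - fps_const a * fps_X - fps_const b * fps_X^2)"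
proof (rule fps_div_eqI)
  show "(1 - fps_const a * fps_X - fps_const b * fps_X^2) $ 0 \<noteq> (0::'a)" by simp
  have e: "Abs_fps A * (1 - fps_const a * fps_X - fps_const b * fps_X^2) =
      Abs_fps A - fps_const a * (fps_X * Abs_fps A) - fps_const b * (fps_X^2 * Abs_fps A)"
    by (simp add: algebra_simps)
  show "Abs_fps A * (1 - fps_const a * fps_X - fps_const b * fps_X^2) =
      fps_const (A 0) + fps_const (A 1 - a * A 0) * fps_X + fps_const (A 2 - a * A 1 - b * A 0) * fps_X^2"
    unfolding e
  proof (rule fps_ext)
    fix n :: nat
    consider "n = 0" | "n = 1" | "n = 2" | "n \<ge> 3" by linarith
    then show "(Abs_fps A - fps_const a * (fps_X * Abs_fps A) - fps_const b * (fps_X^2 * Abs_fps A)) $ n =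
      (fps_const (A 0) + fps_const (A 1 - a * A 0) * fps_X + fps_const (A 2 - a * A 1 - b * A 0) * fps_X^2) $ n"
    proof cases
      case 4 then show ?thesis using rec[OF 4] by (simp add: fps_X_power_mult_nth)
    qed (simp_all add: fps_X_power_mult_nth)
  qed
qed




lemma w_facts: assumes "w \<in> Sn_av m" "m \<ge> 1"
  shows "distinct w" "set w = {1..m}" "distinct (map (hh m) w)" "set (map (hh m) w) = {1..Suc m} - {m}"
    "\<forall>a\<in>set w. \<forall>b\<in>set w. (hh m a < hh m b) = (a < b)" "w \<noteq> []"
proof -
  show w: "distinct w" "set w = {1..m}" using assms unfolding Sn_av_alt by auto
  have inj: "inj_on (hh m) {1..m}" unfolding inj_on_def hh_def by auto
  show "distinct (map (hh m) w)" using w inj by (simp add: distinct_map)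
  show "set (map (hh m) w) = {1..Suc m} - {m}" using w(2) hh_img[OF assms(2)] by simp
  show "\<forall>a\<in>set w. \<forall>b\<in>set w. (hh m a < hh m b) = (a < b)" using w(2) hh_mono by auto
  show "w \<noteq> []" using w(2) assms(2) by auto
qed

lemma lrmax_1: assumes "w \<in> Sn_av m" shows "lrmax (Suc m # w) = 1"
proof -
  have "set w = {1..m}" using assms unfolding Sn_av_alt by auto
  then have "\<forall>i<length w. \<not> Suc m < w!i" using nth_mem by fastforce
  then have "{i. i < length w \<and> Suc m < w!i \<and> (\<forall>j<i. w!j < w!i)} = {}" by auto
  then show ?thesis unfolding lrmax_Cons by simp
qed

lemma lrmax_2: assumes "w \<in> Sn_av m" "m \<ge> 1" shows "lrmax (m # map (hh m) w) = 2"
proof -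
  let ?w = "map (hh m) w"
  note f = w_facts[OF assms]
  have "Suc m \<in> set ?w" using f(4) by auto
  then obtain i0 where i0: "i0 < length ?w" "?w!i0 = Suc m" by (metis in_set_conv_nth)
  have "{i. i < length ?w \<and> m < ?w!i \<and> (\<forall>j<i. ?w!j < ?w!i)} = {i0}"
  proof (intro equalityI subsetI)
    fix i assume "i \<in> {i. i < length ?w \<and> m < ?w!i \<and> (\<forall>j<i. ?w!j < ?w!i)}"
    then have i: "i < length ?w" "m < ?w!i" by blast+
    then have "?w!i \<in> {1..Suc m} - {m}" using f(4) nth_mem by blast
    then have "?w!i = ?w!i0" using i i0 by auto
    then have "i = i0" using i(1) i0(1) nth_eq_iff_index_eq[OF f(3), of i i0] by blast
    then show "i \<in> {i0}" by simp
  next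
    fix i assume "i \<in> {i0}"
    then have i: "i = i0" by simp
    have "\<forall>j<i0. ?w!j < ?w!i0"
    proof (intro allI impI)
      fix j assume j: "j < i0"
      have jl: "j < length ?w" using j i0 by simp
      have "?w!j \<noteq> ?w!i0" using j jl i0(1) nth_eq_iff_index_eq[OF f(3), of j i0] by auto
      moreover have "?w!j \<in> {1..Suc m} - {m}" using f(4) jl nth_mem by blast
      ultimately show "?w!j < ?w!i0" using i0 by auto
    qed
    then show "i \<in> {i. i < length ?w \<and> m < ?w!i \<and> (\<forall>j<i. ?w!j < ?w!i)}" using i i0 by auto
  qed
  then show ?thesis unfolding lrmax_Cons by simp
qed

lemma rlmax_1: assumes "w \<in> Sn_av m" shows "rlmax (Suc m # w) = Suc (rlmax w)"
proof -
  have "set w = {1..m}" using assms unfolding Sn_av_alt by auto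
  then show ?thesis unfolding rlmax_Cons by auto
qed

lemma rlmax_2: assumes "w \<in> Sn_av m" "m \<ge> 1" shows "rlmax (m # map (hh m) w) = rlmax w"
proof -
  note f = w_facts[OF assms]
  have S: "Suc m \<in> set (map (hh m) w)" using f(4) by auto
  have "\<not> Suc m < m" by simp
  then have c: "(\<forall>y\<in>set (map (hh m) w). y < m) = False" using S by blast
  show ?thesis using stats_map(3)[OF f(5)] by (subst rlmax_Cons, subst c, simp)
qed

lemma rlmin_1: assumes "w \<in> Sn_av m" "m \<ge> 1" shows "rlmin (Suc m # w) = rlmin w"
proof -
  have "1 \<in> set w" using assms unfolding Sn_av_alt by auto
  then show ?thesis unfolding rlmin_Cons by auto
qed

lemma rlmin_2: assumes "w \<in> Sn_av m" "m \<ge> 2" shows "rlmin (m # map (hh m) w) = rlmin w"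
proof -
  have m1: "m \<ge> 1" using assms by simp
  note f = w_facts[OF assms(1) m1]
  have "1 \<in> set (map (hh m) w)" using f(4) assms(2) by auto
  moreover have "\<not> m < 1" using assms(2) by simp
  ultimately have c: "(\<forall>y\<in>set (map (hh m) w). m < y) = False" by blast
  show ?thesis using stats_map(4)[OF f(5)] by (subst rlmin_Cons, subst c, simp)
qed

lemma lrmin_1: assumes "w \<in> Sn_av m" shows "lrmin (Suc m # w) = Suc (lrmin w)"
proof -
  have "set w = {1..m}" using assms unfolding Sn_av_alt by auto
  then have "\<forall>i<length w. w!i < Suc m" using nth_mem by fastforce
  then have "{i. i < length w \<and> w!i < Suc m \<and> (\<forall>j<i. w!i < w!j)} = {i. i < length w \<and> (\<forall>j<i. w!i < w!j)}"
    by auto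
  then show ?thesis by (subst lrmin_Cons) (simp add: lrmin_def)
qed

lemma lrmin_2: assumes "w \<in> Sn_av m" "m \<ge> 1"
  shows "lrmin (m # map (hh m) w) = (if hd w = m then lrmin w else Suc (lrmin w))"
proof -
  let ?w = "map (hh m) w"
  note f = w_facts[OF assms]
  define L where "L = {i. i < length ?w \<and> (\<forall>j<i. ?w!i < ?w!j)}"
  have finL: "finite L" unfolding L_def by simp
  have cL: "card L = lrmin w" unfolding L_def using stats_map(2)[OF f(5)] unfolding lrmin_def by simp
  have mem: "i < length ?w \<Longrightarrow> ?w!i \<in> {1..Suc m} - {m}" for i using f(4) nth_mem by blast
  have lt: "i < length ?w \<Longrightarrow> (?w!i < m) = (?w!i \<noteq> Suc m)" for i using mem[of i] by auto
  have len: "length ?w > 0" using f(6) by simp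
  have hdw: "?w!0 = hh m (hd w)" using f(6) by (simp add: hd_conv_nth)
  have hdin: "hd w \<in> {1..m}" using f(2,6) by (metis hd_in_set)
  have S: "{i. i < length ?w \<and> ?w!i < m \<and> (\<forall>j<i. ?w!i < ?w!j)} = L - (if hd w = m then {0} else {})"
  proof (cases "hd w = m")
    case True
    then have w0: "?w!0 = Suc m" using hdw by (simp add: hh_def)
    have "i < length ?w \<Longrightarrow> (?w!i \<noteq> Suc m) = (i \<noteq> 0)" for i
      using w0 len nth_eq_iff_index_eq[OF f(3), of i 0] by simp
    then show ?thesis using True lt unfolding L_def by auto
  next
    case False
    then have w0: "?w!0 \<noteq> Suc m" using hdw hdin by (auto simp: hh_def)
    have "i < length ?w \<Longrightarrow> (\<forall>j<i. ?w!i < ?w!j) \<Longrightarrow> ?w!i \<noteq> Suc m" for i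
    proof (cases i)
      case 0 then show "?w!i \<noteq> Suc m" using w0 by simp
    next
      case (Suc k)
      assume "i < length ?w" "\<forall>j<i. ?w!i < ?w!j"
      then have "?w!i < ?w!0" using Suc len by auto
      moreover have "?w!0 \<le> Suc m" using mem[OF len] by auto
      ultimately show "?w!i \<noteq> Suc m" by simp
    qed
    then show ?thesis using False lt unfolding L_def by auto
  qed
  have "0 \<in> L" unfolding L_def using len by simp
  then have "card (L - (if hd w = m then {0} else {})) = (if hd w = m then card L - 1 else card L)"
    using finL by auto
  moreover have "card L \<ge> 1" using \<open>0 \<in> L\<close> finL using card_gt_0_iff[of L] by (auto simp: Suc_le_eq)
  ultimately show ?thesis unfolding lrmin_Cons S cL by auto
qed






definition Acf :: "(nat list \<Rightarrow> nat) \<Rightarrow> 'a::field \<Rightarrow> nat \<Rightarrow> 'a" where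
  "Acf stat c n = (\<Sum>w\<in>Sn_av n. c ^ stat w)"

lemma gf_Acf: "gf stat c = Abs_fps (Acf stat c)" unfolding gf_def Acf_def by simp

lemma Acf_0: "stat [] = 0 \<Longrightarrow> Acf stat c 0 = 1" unfolding Acf_def Sn_av_0 by simp
lemma Acf_1: "Acf stat c 1 = c ^ stat [1]" unfolding Acf_def Sn_av_1 by simp

lemma nil_stats: "lrmax [] = 0" "lrmin [] = 0" "rlmax [] = 0" "rlmin [] = 0"
  unfolding lrmax_def lrmin_def rlmax_def rlmin_def by simp_all

lemma one_stats: "lrmax [1] = 1" "lrmin [1] = 1" "rlmax [1] = 1" "rlmin [1] = 1"
  using lrmax_1[of "[]" 0] lrmin_1[of "[]" 0] by (simp_all add: Sn_av_0 rlmax_Cons rlmin_Cons nil_stats)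

lemma card_rec: "m \<ge> 1 \<Longrightarrow> card (Sn_av (Suc m)) = 2 * card (Sn_av m)"
  using decomp_sum[of m "\<lambda>_. (1::nat)"] by simp

lemma lrmax_rec: "m \<ge> 1 \<Longrightarrow> Acf lrmax u (Suc m) = of_nat (card (Sn_av m)) * (u + u^2)"
  unfolding Acf_def
  by (simp add: decomp_sum lrmax_1 lrmax_2 cong: sum.cong) (simp add: algebra_simps power2_eq_square)

lemma rlmax_rec: "m \<ge> 1 \<Longrightarrow> Acf rlmax v (Suc m) = (1 + v) * Acf rlmax v m"
  unfolding Acf_def
  by (simp add: decomp_sum rlmax_1 rlmax_2 sum_distrib_left cong: sum.cong) (simp add: algebra_simps sum.distrib)

lemma rlmin_rec: "m \<ge> 2 \<Longrightarrow> Acf rlmin t (Suc m) = 2 * Acf rlmin t m"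
  unfolding Acf_def
  by (simp add: decomp_sum rlmin_1 rlmin_2 cong: sum.cong)

lemma rlmin_2v: "Acf rlmin t 2 = t + t^2"
proof -
  have "Acf rlmin t (Suc 1) = t ^ rlmin [Suc (Suc 0), Suc 0] + t ^ rlmin [Suc 0, Suc (Suc 0)]"
    unfolding Acf_def using decomp_sum[of 1 "\<lambda>w. t ^ rlmin w"] by (simp add: Sn_av_1 Sn_av_1[unfolded One_nat_def] hh_def)
  then show ?thesis by (simp add: rlmin_Cons nil_stats power2_eq_square numeral_2_eq_2)
qed

definition Gl :: "'a::field \<Rightarrow> nat \<Rightarrow> 'a" where
  "Gl s m = (\<Sum>w\<in>Sn_av m. if hd w = m then s ^ lrmin w else s ^ Suc (lrmin w))"

lemma lrmin_recA: "m \<ge> 1 \<Longrightarrow> Acf lrmin s (Suc m) = s * Acf lrmin s m + Gl s m"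
  unfolding Acf_def Gl_def
  by (simp add: decomp_sum lrmin_1 lrmin_2 sum_distrib_left cong: sum.cong) (auto intro!: sum.cong)

lemma lrmin_recG: "m \<ge> 1 \<Longrightarrow> Gl s (Suc m) = s * Acf lrmin s m + s * Gl s m"
proof -
  assume m: "m \<ge> 1"
  have "Gl s (Suc m) = (\<Sum>w\<in>Sn_av m. s ^ lrmin (Suc m # w)) + (\<Sum>w\<in>Sn_av m. s * s ^ lrmin (m # map (hh m) w))"
    unfolding Gl_def using decomp_sum[OF m, of "\<lambda>w. if hd w = Suc m then s ^ lrmin w else s ^ Suc (lrmin w)"]
    by simp
  also have "\<dots> = s * Acf lrmin s m + s * Gl s m"
    unfolding Acf_def Gl_def using m
    by (simp add: lrmin_1 lrmin_2 sum_distrib_left cong: sum.cong) (auto intro!: sum.cong)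
  finally show ?thesis .
qed

lemma Gl_1: "Gl s 1 = s" unfolding Gl_def Sn_av_1 by (simp add: one_stats one_stats[unfolded One_nat_def])






lemma two_nth: "((2::'a::comm_ring_1 fps) * f) $ n = 2 * f $ n"
  by (simp only: mult_2 fps_add_nth)

lemma card1: "card (Sn_av 1) = 1" unfolding Sn_av_1 by simp

lemma part_lrmax:
  fixes u :: "'a::field"
  shows "gf lrmax u = (1 - 2 * fps_X + fps_const u * fps_X - fps_const u * fps_X ^ 2
                         + fps_const (u ^ 2) * fps_X ^ 2) / (1 - 2 * fps_X)"
proof -
  let ?A = "Acf lrmax u"
  have A0: "?A 0 = 1" by (simp add: Acf_0 nil_stats)
  have A1: "?A 1 = u" unfolding Acf_1 one_stats by simp
  have A2: "?A 2 = u + u^2" using lrmax_rec[of 1 u] card1 by (simp add: numeral_2_eq_2)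
  have rec: "?A n = 2 * ?A (n-1) + 0 * ?A (n-2)" if "n \<ge> 3" for n
  proof -
    define m where "m = n - 2"
    have m: "n = Suc (Suc m)" "m \<ge> 1" using that unfolding m_def by auto
    have "?A n = of_nat (card (Sn_av (Suc m))) * (u + u^2)" using lrmax_rec[of "Suc m" u] m by simp
    also have "\<dots> = 2 * (of_nat (card (Sn_av m)) * (u + u^2))" using card_rec[OF m(2)] by simp
    also have "\<dots> = 2 * ?A (n-1)" using lrmax_rec[OF m(2), of u] m by simp
    finally show ?thesis by simp
  qed
  have N: "fps_const (?A 0) + fps_const (?A 1 - 2 * ?A 0) * fps_X + fps_const (?A 2 - 2 * ?A 1 - 0 * ?A 0) * fps_X^2
      = (1 - 2 * fps_X + fps_const u * fps_X - fps_const u * fps_X ^ 2 + fps_const (u ^ 2) * fps_X ^ 2 :: 'a fps)"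
  proof (rule fps_ext)
    fix n :: nat
    consider "n = 0" | "n = 1" | "n = 2" | "n \<ge> 3" by linarith
    then show "(fps_const (?A 0) + fps_const (?A 1 - 2 * ?A 0) * fps_X + fps_const (?A 2 - 2 * ?A 1 - 0 * ?A 0) * fps_X^2) $ n
      = (1 - 2 * fps_X + fps_const u * fps_X - fps_const u * fps_X ^ 2 + fps_const (u ^ 2) * fps_X ^ 2 :: 'a fps) $ n"
      by cases (simp_all add: A0 A1 A1[unfolded One_nat_def] A2 two_nth fps_numeral_nth)
  qed
  have D: "(1 - fps_const 2 * fps_X - fps_const 0 * fps_X^2 :: 'a fps) = 1 - 2 * fps_X"
    by (rule fps_ext) (simp add: two_nth fps_numeral_nth)
  show ?thesis using gf_solve[of ?A 2 0, OF rec] unfolding gf_Acf N D .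
qed

lemma part_rlmin:
  fixes t :: "'a::field"
  shows "gf rlmin t = (1 - 2 * fps_X + fps_const t * fps_X - fps_const t * fps_X ^ 2
                         + fps_const (t ^ 2) * fps_X ^ 2) / (1 - 2 * fps_X)"
proof -
  let ?A = "Acf rlmin t"
  have A0: "?A 0 = 1" by (simp add: Acf_0 nil_stats)
  have A1: "?A 1 = t" unfolding Acf_1 one_stats by simp
  have A2: "?A 2 = t + t^2" by (rule rlmin_2v)
  have rec: "?A n = 2 * ?A (n-1) + 0 * ?A (n-2)" if "n \<ge> 3" for n
  proof -
    define m where "m = n - 1"
    have m: "n = Suc m" "m \<ge> 2" using that unfolding m_def by auto
    show ?thesis using rlmin_rec[OF m(2), of t] m by simp
  qed
  have N: "fps_const (?A 0) + fps_const (?A 1 - 2 * ?A 0) * fps_X + fps_const (?A 2 - 2 * ?A 1 - 0 * ?A 0) * fps_X^2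
      = (1 - 2 * fps_X + fps_const t * fps_X - fps_const t * fps_X ^ 2 + fps_const (t ^ 2) * fps_X ^ 2 :: 'a fps)"
  proof (rule fps_ext)
    fix n :: nat
    consider "n = 0" | "n = 1" | "n = 2" | "n \<ge> 3" by linarith
    then show "(fps_const (?A 0) + fps_const (?A 1 - 2 * ?A 0) * fps_X + fps_const (?A 2 - 2 * ?A 1 - 0 * ?A 0) * fps_X^2) $ n
      = (1 - 2 * fps_X + fps_const t * fps_X - fps_const t * fps_X ^ 2 + fps_const (t ^ 2) * fps_X ^ 2 :: 'a fps) $ n"
      by cases (simp_all add: A0 A1 A1[unfolded One_nat_def] A2 two_nth fps_numeral_nth)
  qed
  have D: "(1 - fps_const 2 * fps_X - fps_const 0 * fps_X^2 :: 'a fps) = 1 - 2 * fps_X"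
    by (rule fps_ext) (simp add: two_nth fps_numeral_nth)
  show ?thesis using gf_solve[of ?A 2 0, OF rec] unfolding gf_Acf N D .
qed

lemma part_rlmax:
  fixes v :: "'a::field"
  shows "gf rlmax v = (1 - fps_X) / (1 - fps_X - fps_const v * fps_X)"
proof -
  let ?A = "Acf rlmax v"
  have A0: "?A 0 = 1" by (simp add: Acf_0 nil_stats)
  have A1: "?A 1 = v" unfolding Acf_1 one_stats by simp
  have A2: "?A 2 = (1 + v) * v" using rlmax_rec[of 1 v] A1 by (simp add: numeral_2_eq_2)
  have rec: "?A n = (1 + v) * ?A (n-1) + 0 * ?A (n-2)" if "n \<ge> 3" for n
  proof -
    define m where "m = n - 1"
    have m: "n = Suc m" "m \<ge> 1" using that unfolding m_def by auto
    show ?thesis using rlmax_rec[OF m(2), of v] m by simp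
  qed
  have N: "fps_const (?A 0) + fps_const (?A 1 - (1 + v) * ?A 0) * fps_X + fps_const (?A 2 - (1 + v) * ?A 1 - 0 * ?A 0) * fps_X^2
      = (1 - fps_X :: 'a fps)"
  proof (rule fps_ext)
    fix n :: nat
    consider "n = 0" | "n = 1" | "n = 2" | "n \<ge> 3" by linarith
    then show "(fps_const (?A 0) + fps_const (?A 1 - (1 + v) * ?A 0) * fps_X + fps_const (?A 2 - (1 + v) * ?A 1 - 0 * ?A 0) * fps_X^2) $ n
      = (1 - fps_X :: 'a fps) $ n"
      by cases (simp_all add: A0 A1 A1[unfolded One_nat_def] A2)
  qed
  have D: "(1 - fps_const (1 + v) * fps_X - fps_const 0 * fps_X^2 :: 'a fps) = 1 - fps_X - fps_const v * fps_X"
    by (rule fps_ext) (simp add: algebra_simps)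
  show ?thesis using gf_solve[of ?A "1 + v" 0, OF rec] unfolding gf_Acf N D .
qed

lemma part_lrmin:
  fixes s :: "'a::field"
  shows "gf lrmin s = (1 - fps_const s * fps_X) /
           (1 - 2 * fps_const s * fps_X - fps_const s * fps_X ^ 2 + fps_const (s ^ 2) * fps_X ^ 2)"
proof -
  let ?A = "Acf lrmin s"
  have A0: "?A 0 = 1" by (simp add: Acf_0 nil_stats)
  have A1: "?A 1 = s" unfolding Acf_1 one_stats by simp
  have A2: "?A 2 = s * s + s" using lrmin_recA[of 1 s] A1 Gl_1[of s] by (simp add: numeral_2_eq_2)
  have rec: "?A n = (2 * s) * ?A (n-1) + (s - s^2) * ?A (n-2)" if "n \<ge> 3" for n
  proof -
    define k where "k = n - 2"
    have k: "n = Suc (Suc k)" "k \<ge> 1" using that unfolding k_def by auto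
    have e1: "?A (Suc (Suc k)) = s * ?A (Suc k) + Gl s (Suc k)" using lrmin_recA[of "Suc k" s] by simp
    have e2: "Gl s (Suc k) = s * ?A k + s * Gl s k" using lrmin_recG[OF k(2)] .
    have e3: "?A (Suc k) = s * ?A k + Gl s k" using lrmin_recA[OF k(2)] .
    have "?A n = 2 * s * ?A (Suc k) + (s - s^2) * ?A k"
      unfolding k(1) e1 e2 using e3 by (simp add: algebra_simps power2_eq_square)
    then show ?thesis using k by simp
  qed
  have N: "fps_const (?A 0) + fps_const (?A 1 - (2 * s) * ?A 0) * fps_X + fps_const (?A 2 - (2 * s) * ?A 1 - (s - s^2) * ?A 0) * fps_X^2
      = (1 - fps_const s * fps_X :: 'a fps)"
  proof (rule fps_ext)
    fix n :: nat
    consider "n = 0" | "n = 1" | "n = 2" | "n \<ge> 3" by linarith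
    then show "(fps_const (?A 0) + fps_const (?A 1 - (2 * s) * ?A 0) * fps_X + fps_const (?A 2 - (2 * s) * ?A 1 - (s - s^2) * ?A 0) * fps_X^2) $ n
      = (1 - fps_const s * fps_X :: 'a fps) $ n"
      by cases (simp_all add: A0 A1 A1[unfolded One_nat_def] A2 power2_eq_square algebra_simps)
  qed
  have D: "(1 - fps_const (2 * s) * fps_X - fps_const (s - s^2) * fps_X^2 :: 'a fps)
      = 1 - 2 * fps_const s * fps_X - fps_const s * fps_X ^ 2 + fps_const (s ^ 2) * fps_X ^ 2"
    by (rule fps_ext) (simp add: two_nth fps_numeral_nth mult.assoc algebra_simps)
  show ?thesis using gf_solve[of ?A "2 * s" "s - s^2", OF rec] unfolding gf_Acf N D .
qed


theorem corollary2:
  fixes u v s t :: "'a::field"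
  shows "gf lrmax u = (1 - 2 * fps_X + fps_const u * fps_X - fps_const u * fps_X ^ 2
                         + fps_const (u ^ 2) * fps_X ^ 2) / (1 - 2 * fps_X)
       \<and> gf rlmax v = (1 - fps_X) / (1 - fps_X - fps_const v * fps_X)
       \<and> gf lrmin s = (1 - fps_const s * fps_X) /
           (1 - 2 * fps_const s * fps_X - fps_const s * fps_X ^ 2 + fps_const (s ^ 2) * fps_X ^ 2)
       \<and> gf rlmin t = (1 - 2 * fps_X + fps_const t * fps_X - fps_const t * fps_X ^ 2
                         + fps_const (t ^ 2) * fps_X ^ 2) / (1 - 2 * fps_X)"
    using part_lrmax[of u] part_rlmax[of v] part_lrmin[of s] part_rlmin[of t] by blast

end
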